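(* For every homeomorphism $f:[0,1]\to[0,1]$ we have $h(\langle f\rangle,[0,1])=+\infty$, where $\langle f\rangle=\{f^n:n\in\mathbb{Z}\}$.
   Context: For a subgroup $G$ of the group of homeomorphisms of a space $A$ (acting by $gx=g(x)$), a nonempty subset $Y\subseteq A$ is invariant if $g(y)\in Y$ for all $g\in G$, $y\in Y$. The height of $(G,A)$ is $h(G,A)=\sup\{n\geq 0:$ there exist distinct closed invariant subsets $Y_0\subset Y_1\subset\cdots\subset Y_n=A\}$ (possibly $+\infty$). *)

theory Defs
  imports "HOL-Analysis.Analysis" "HOL-Library.Extended_Nat"
begin

definition int_iter :: "'a set \<Rightarrow> ('a \<Rightarrow> 'a) \<Rightarrow> int \<Rightarrow> ('a \<Rightarrow> 'a)" where
  "int_iter A f n = (if n \<ge> 0 then f ^^ nat n else (inv_into A f) ^^ nat (- n))"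

definition cyclic_group :: "'a set \<Rightarrow> ('a \<Rightarrow> 'a) \<Rightarrow> ('a \<Rightarrow> 'a) set" where
  "cyclic_group A f = {int_iter A f n | n. True}"

definition invariant_subset :: "('a \<Rightarrow> 'a) set \<Rightarrow> 'a set \<Rightarrow> 'a set \<Rightarrow> bool" where
  "invariant_subset G A Y \<longleftrightarrow> Y \<noteq> {} \<and> Y \<subseteq> A \<and> (\<forall>g\<in>G. \<forall>y\<in>Y. g y \<in> Y)"

definition height :: "('a \<Rightarrow> 'a) set \<Rightarrow> 'a topology \<Rightarrow> enat" where
  "height G X = Sup {enat n | n. \<exists>Y :: nat \<Rightarrow> 'a set.
      (\<forall>i\<le>n. closedin X (Y i) \<and> invariant_subset G (topspace X) (Y i))
    \<and> (\<forall>i<n. Y i \<subset> Y (Suc i)) \<and> Y n = topspace X}"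

end

theory Submission
  imports Defs
begin

definition orb :: "('a \<Rightarrow> 'a) \<Rightarrow> ('a \<Rightarrow> 'a) \<Rightarrow> 'a set \<Rightarrow> 'a set" where
  "orb f g Q = {(f^^n) q | n q. q \<in> Q} \<union> {(g^^n) q | n q. q \<in> Q}"

lemma funpow_in: "f ` A \<subseteq> A \<Longrightarrow> x \<in> A \<Longrightarrow> (f^^n) x \<in> A"
  by (induction n) auto

lemma orb_sub: "f ` A \<subseteq> A \<Longrightarrow> g ` A \<subseteq> A \<Longrightarrow> Q \<subseteq> A \<Longrightarrow> orb f g Q \<subseteq> A"
  unfolding orb_def using funpow_in[of f A] funpow_in[of g A] by blast

lemma orb_mono: "Q \<subseteq> R \<Longrightarrow> orb f g Q \<subseteq> orb f g R"
  unfolding orb_def by blast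

lemma orb_base: "Q \<subseteq> orb f g Q"
proof
  fix q assume "q \<in> Q"
  moreover have "q = (f^^0) q" by simp
  ultimately show "q \<in> orb f g Q" unfolding orb_def by blast
qed

lemma orb_swap: "orb f g Q = orb g f Q"
  unfolding orb_def by blast

lemma orb_f:
  assumes gA: "g ` A \<subseteq> A" and fg: "\<forall>x\<in>A. f (g x) = x" and QA: "Q \<subseteq> A" and y: "y \<in> orb f g Q"
  shows "f y \<in> orb f g Q"
proof -
  from y consider n q where "q\<in>Q" "y = (f^^n) q" | n q where "q\<in>Q" "y = (g^^n) q"
    unfolding orb_def by blast
  then show ?thesis
  proof cases
    case 1
    then have "f y = (f^^Suc n) q" by simp
    with 1 show ?thesis unfolding orb_def by blast
  next
    case 2
    show ?thesis
    proof (cases n)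
      case 0
      with 2 have "f y = (f^^1) q" by simp
      with 2 show ?thesis unfolding orb_def by blast
    next
      case (Suc m)
      have "(g^^m) q \<in> A" using funpow_in[OF gA] QA 2 by blast
      then have "f y = (g^^m) q" using 2 Suc fg by simp
      with 2 show ?thesis unfolding orb_def by blast
    qed
  qed
qed

lemma invariant_closed_under:
  assumes "f ` Y \<subseteq> Y" "inv_into A f ` Y \<subseteq> Y" "h \<in> cyclic_group A f" "y \<in> Y"
  shows "h y \<in> Y"
proof -
  obtain n where h: "h = int_iter A f n" using assms(3) unfolding cyclic_group_def by blast
  have "\<forall>k. (f^^k) y \<in> Y" using funpow_in[OF assms(1) assms(4)] by blast
  moreover have "\<forall>k. (inv_into A f^^k) y \<in> Y" using funpow_in[OF assms(2) assms(4)] by blast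
  ultimately show ?thesis unfolding h int_iter_def by auto
qed

lemma height_infinite:
  fixes f g :: "real \<Rightarrow> real"
  assumes clA: "closed A" and gdef: "g = inv_into A f"
    and fA: "f ` A \<subseteq> A" and gA: "g ` A \<subseteq> A"
    and cf: "continuous_on A f" and cg: "continuous_on A g"
    and fg: "\<forall>x\<in>A. f (g x) = x" and gf: "\<forall>x\<in>A. g (f x) = x"
    and D: "D \<subseteq> A" "D \<noteq> {}"
    and H: "\<And>Q. finite Q \<Longrightarrow> Q \<subseteq> D \<Longrightarrow> \<exists>x\<in>D. x \<notin> closure (orb f g Q)"
  shows "height (cyclic_group A f) (top_of_set A) = \<infinity>"
proof -
  define C where "C Q = closure (orb f g Q)" for Q
  have CA: "C Q \<subseteq> A" if "Q \<subseteq> A" for Q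
    unfolding C_def using closure_minimal[OF orb_sub[OF fA gA that] clA] .
  have Cinv: "invariant_subset (cyclic_group A f) A (C Q)" if "Q \<subseteq> A" "Q \<noteq> {}" for Q
  proof -
    have "f ` C Q \<subseteq> C Q" unfolding C_def
    proof (rule image_closure_subset)
      show "continuous_on (closure (orb f g Q)) f"
        using continuous_on_subset[OF cf] CA[OF that(1)] unfolding C_def by blast
      show "closed (closure (orb f g Q))" by simp
      show "f ` orb f g Q \<subseteq> closure (orb f g Q)"
      proof (rule image_subsetI)
        fix y assume "y \<in> orb f g Q"
        then have "f y \<in> orb f g Q" by (rule orb_f[OF gA fg that(1)])
        then show "f y \<in> closure (orb f g Q)" using closure_subset by blast
      qed
    qed
    moreover have "g ` C Q \<subseteq> C Q" unfolding C_def
    proof (rule image_closure_subset)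
      show "continuous_on (closure (orb f g Q)) g"
        using continuous_on_subset[OF cg] CA[OF that(1)] unfolding C_def by blast
      show "closed (closure (orb f g Q))" by simp
      show "g ` orb f g Q \<subseteq> closure (orb f g Q)"
      proof (rule image_subsetI)
        fix y assume "y \<in> orb f g Q"
        then have "y \<in> orb g f Q" using orb_swap[of f g Q] by simp
        then have "g y \<in> orb g f Q" by (rule orb_f[OF fA gf that(1)])
        then show "g y \<in> closure (orb f g Q)" using closure_subset orb_swap[of f g Q] by blast
      qed
    qed
    moreover have "Q \<subseteq> C Q"
      using orb_base[of Q f g] closure_subset[of "orb f g Q"] unfolding C_def by (rule subset_trans)
    ultimately show ?thesis unfolding invariant_subset_def
      using invariant_closed_under[of f "C Q" A] CA[OF that(1)] that(2) gdef by blast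
  qed
  have Cclosed: "closedin (top_of_set A) (C Q)" if "Q \<subseteq> A" for Q
    using CA[OF that] unfolding closedin_closed C_def
    by (intro exI[of _ "closure (orb f g Q)"]) auto
  have Ainv: "invariant_subset (cyclic_group A f) A A"
    unfolding invariant_subset_def
    using invariant_closed_under[of f A A] fA gA gdef D by blast
  have Aclosed: "closedin (top_of_set A) A"
    using closedin_topspace[of "top_of_set A"] by simp
  define nxt where "nxt Q = (SOME x. x \<in> D \<and> x \<notin> C Q)" for Q
  define Qs where "Qs = rec_nat {SOME x. x \<in> D} (\<lambda>k Q. insert (nxt Q) Q)"
  have Qs0: "Qs 0 = {SOME x. x \<in> D}" by (simp add: Qs_def)
  have QsS: "Qs (Suc k) = insert (nxt (Qs k)) (Qs k)" for k by (simp add: Qs_def)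
  have nxtp: "nxt Q \<in> D \<and> nxt Q \<notin> C Q" if Qf: "finite Q" "Q \<subseteq> D" for Q
  proof -
    obtain x where "x \<in> D \<and> x \<notin> C Q" using H[OF Qf] unfolding C_def by blast
    then show ?thesis unfolding nxt_def by (rule someI)
  qed
  have Qprop: "finite (Qs k) \<and> Qs k \<subseteq> D \<and> Qs k \<noteq> {}" for k
  proof (induction k)
    case 0
    have "(SOME x. x \<in> D) \<in> D" using D(2) by (simp add: some_in_eq)
    then show ?case by (simp add: Qs0)
  next
    case (Suc k)
    then show ?case using nxtp[of "Qs k"] by (simp add: QsS)
  qed
  have QA: "Qs k \<subseteq> A" for k using Qprop[of k] D by blast
  have strict: "C (Qs k) \<subset> C (Qs (Suc k))" for k
  proof -
    have "C (Qs k) \<subseteq> C (Qs (Suc k))" unfolding C_def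
      by (rule closure_mono, rule orb_mono) (auto simp: QsS)
    moreover have "nxt (Qs k) \<in> C (Qs (Suc k))"
      unfolding C_def using orb_base closure_subset by (fastforce simp: QsS)
    ultimately show ?thesis using nxtp[of "Qs k"] Qprop[of k] by blast
  qed
  have strictA: "C (Qs k) \<subset> A" for k
    using CA[OF QA[of k]] nxtp[of "Qs k"] Qprop[of k] D by blast
  have mem: "enat n \<in> {enat n | n. \<exists>Y :: nat \<Rightarrow> real set.
      (\<forall>i\<le>n. closedin (top_of_set A) (Y i) \<and> invariant_subset (cyclic_group A f) (topspace (top_of_set A)) (Y i))
    \<and> (\<forall>i<n. Y i \<subset> Y (Suc i)) \<and> Y n = topspace (top_of_set A)}" for n
  proof -
    define Y where "Y i = (if i < n then C (Qs i) else A)" for i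
    have "\<forall>i\<le>n. closedin (top_of_set A) (Y i) \<and> invariant_subset (cyclic_group A f) A (Y i)"
      using Cclosed[OF QA] Cinv[OF QA] Qprop Aclosed Ainv unfolding Y_def by auto
    moreover have "\<forall>i<n. Y i \<subset> Y (Suc i)"
      using strict strictA unfolding Y_def by auto
    moreover have "Y n = A" unfolding Y_def by simp
    ultimately show ?thesis by auto
  qed
  have le: "enat n \<le> height (cyclic_group A f) (top_of_set A)" for n
    unfolding height_def by (rule Sup_upper) (rule mem)
  show ?thesis
  proof (rule ccontr)
    assume "height (cyclic_group A f) (top_of_set A) \<noteq> \<infinity>"
    then obtain m where "height (cyclic_group A f) (top_of_set A) = enat m" by (cases "height (cyclic_group A f) (top_of_set A)") auto
    with le[of "Suc m"] show False by simp
  qed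
qed


lemma inj_cont_mono:
  fixes f :: "real \<Rightarrow> real"
  assumes cont: "continuous_on {0..1} f" and inj: "inj_on f {0..1}" and lt: "f 0 < f 1"
  shows "\<forall>x\<in>{0..1}. \<forall>y\<in>{0..1}. x < y \<longrightarrow> f x < f y"
proof -
  have mid: "f 0 < f x" if "0 < x" "x \<le> 1" for x
  proof (cases "x = 1")
    case True then show ?thesis using lt by simp
  next
    case False
    then have "x < 1" using that by simp
    from continuous_inj_imp_mono[of 0 x 1 f, OF that(1) this cont inj]
    show ?thesis using lt by linarith
  qed
  show ?thesis
  proof (intro ballI impI)
    fix x y :: real assume x: "x \<in> {0..1}" and y: "y \<in> {0..1}" and xy: "x < y"
    show "f x < f y"
    proof (cases "x = 0")
      case True then show ?thesis using mid[of y] xy y by simp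
    next
      case False
      have sub: "{0..y} \<subseteq> {0..1}" using y by auto
      have c: "continuous_on {0..y} f" using continuous_on_subset[OF cont sub] .
      have i: "inj_on f {0..y}" using inj_on_subset[OF inj sub] .
      have "0 < x" using False x by auto
      from continuous_inj_imp_mono[of 0 x y f, OF this xy c i]
      have "(f 0 < f x \<and> f x < f y) \<or> (f y < f x \<and> f x < f 0)" .
      moreover have "f 0 < f x" using mid[of x] \<open>0 < x\<close> x by simp
      ultimately show ?thesis by linarith
    qed
  qed
qed


lemma incr_iter_mono:
  fixes h :: "real \<Rightarrow> real"
  assumes hA: "h ` A \<subseteq> A" and mono: "\<forall>x\<in>A. \<forall>y\<in>A. x < y \<longrightarrow> h x < h y"
  shows "x \<in> A \<Longrightarrow> y \<in> A \<Longrightarrow> x < y \<Longrightarrow> (h^^n) x < (h^^n) y"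
proof (induction n)
  case 0 then show ?case by simp
next
  case (Suc n)
  then show ?case using mono funpow_in[OF hA, of x n] funpow_in[OF hA, of y n] by simp
qed

lemma incr_wander:
  fixes h :: "real \<Rightarrow> real"
  assumes hA: "h ` A \<subseteq> A" and mono: "\<forall>x\<in>A. \<forall>y\<in>A. x < y \<longrightarrow> h x < h y"
    and p: "p \<in> A" and hp: "h p \<noteq> p"
    and n: "n > 0" and x: "x \<in> A" "min p (h p) < x" "x < max p (h p)"
  shows "\<not> (min p (h p) < (h^^n) x \<and> (h^^n) x < max p (h p))"
proof -
  have lemono: "h u \<le> h v" if "u \<in> A" "v \<in> A" "u \<le> v" for u v
    using mono that by (cases "u = v") (auto simp: order_le_less)
  obtain m where m: "n = Suc m" using n by (cases n) auto
  have hpA: "h p \<in> A" using hA p by blast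
  show ?thesis
  proof (cases "p < h p")
    case True
    have ge: "(h^^k) p \<ge> p" for k
    proof (induction k)
      case 0 then show ?case by simp
    next
      case (Suc k)
      have "h p \<le> h ((h^^k) p)" using lemono[OF p funpow_in[OF hA p] Suc] .
      then show ?case using True by simp
    qed
    have "(h^^n) p = h ((h^^m) p)" using m by simp
    also have "\<dots> \<ge> h p" using lemono[OF p funpow_in[OF hA p] ge] .
    finally have a: "(h^^n) p \<ge> h p" .
    have "(h^^n) p < (h^^n) x" using incr_iter_mono[OF hA mono p x(1)] x True by simp
    then show ?thesis using a True by simp
  next
    case False
    then have F: "h p < p" using hp by simp
    have le: "(h^^k) p \<le> p" for k
    proof (induction k)
      case 0 then show ?case by simp
    next
      case (Suc k)
      have "h ((h^^k) p) \<le> h p" using lemono[OF funpow_in[OF hA p] p Suc] .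
      then show ?case using F by simp
    qed
    have "(h^^n) p = h ((h^^m) p)" using m by simp
    also have "\<dots> \<le> h p" using lemono[OF funpow_in[OF hA p] p le] .
    finally have a: "(h^^n) p \<le> h p" .
    have "(h^^n) x < (h^^n) p" using incr_iter_mono[OF hA mono x(1) p] x F by simp
    then show ?thesis using a F by simp
  qed
qed

lemma wander_H:
  fixes f g :: "real \<Rightarrow> real"
  assumes gA: "g ` A \<subseteq> A" and fg: "\<forall>x\<in>A. f (g x) = x" and sub: "{a<..<b} \<subseteq> A" and ab: "a < b"
    and W: "\<forall>n>0. \<forall>x\<in>{a<..<b}. (f^^n) x \<notin> {a<..<b}"
    and Q: "finite Q" "Q \<subseteq> {a<..<b}"
  shows "\<exists>x\<in>{a<..<b}. x \<notin> closure (orb f g Q)"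
proof -
  have fgn: "(f^^n) ((g^^n) y) = y" if "y \<in> A" for n y
    using that
  proof (induction n arbitrary: y)
    case 0 then show ?case by simp
  next
    case (Suc n)
    have e: "(g^^Suc n) y = (g^^n) (g y)" by (simp add: funpow_swap1)
    have "(f^^n) ((g^^n) (g y)) = g y" using Suc gA by blast
    then show ?case using e fg Suc.prems by simp
  qed
  have orbD: "orb f g Q \<inter> {a<..<b} \<subseteq> Q"
  proof
    fix y assume y: "y \<in> orb f g Q \<inter> {a<..<b}"
    then have "y \<in> orb f g Q" by blast
    then consider n q where "q\<in>Q" "y = (f^^n) q" | n q where "q\<in>Q" "y=(g^^n) q"
      unfolding orb_def by blast
    then show "y \<in> Q"
    proof cases
      case 1
      show ?thesis
      proof (cases "n = 0")
        case True with 1 show ?thesis by simp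
      next
        case False
        have "q \<in> {a<..<b}" using 1 Q(2) by blast
        then have "(f^^n) q \<notin> {a<..<b}" using W False by blast
        then show ?thesis using 1 y by blast
      qed
    next
      case 2
      show ?thesis
      proof (cases "n = 0")
        case True with 2 show ?thesis by simp
      next
        case False
        have "q \<in> A" using 2 Q sub by blast
        then have "(f^^n) y = q" using 2 fgn by simp
        moreover have "y \<in> {a<..<b}" using y by blast
        ultimately have "(f^^n) y \<in> {a<..<b}" using 2 Q(2) by blast
        then show ?thesis using W False y by blast
      qed
    qed
  qed
  have "infinite {a<..<b}" using ab by simp
  then have "infinite ({a<..<b} - Q)" using Diff_infinite_finite[OF Q(1)] by blast
  then obtain x where x: "x \<in> {a<..<b} - Q" by (metis finite.emptyI ex_in_conv)
  have op: "open ({a<..<b} - Q)" using Q(1) by (simp add: open_Diff finite_imp_closed)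
  have "({a<..<b} - Q) \<inter> orb f g Q = {}" using orbD by blast
  then have "({a<..<b} - Q) \<inter> closure (orb f g Q) = {}" using open_Int_closure_eq_empty[OF op] by blast
  then show ?thesis using x by blast
qed

lemma invol_H:
  fixes f g :: "real \<Rightarrow> real"
  assumes fA: "f ` A \<subseteq> A" and gf: "\<forall>x\<in>A. g (f x) = x" and inv: "\<forall>x\<in>A. f (f x) = x"
    and Q: "finite Q" "Q \<subseteq> A" and inf: "infinite A"
  shows "\<exists>x\<in>A. x \<notin> closure (orb f g Q)"
proof -
  have gq: "g x = f x" if "x \<in> A" for x
  proof -
    have "g (f (f x)) = f x" using gf that fA by blast
    with inv that show ?thesis by simp
  qed
  have fn: "(f^^n) x \<in> {x, f x}" if "x \<in> A" for n x
    using that by (induction n) (auto simp: inv)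
  have gn: "(g^^n) x \<in> {x, f x}" if "x \<in> A" for n x
    using that
  proof (induction n)
    case 0 then show ?case by simp
  next
    case (Suc n)
    have "f x \<in> A" using fA Suc.prems by blast
    then have "(g^^n) x \<in> A" using Suc by auto
    then have "(g^^Suc n) x = f ((g^^n) x)" using gq by simp
    then show ?case using Suc inv by auto
  qed
  have "orb f g Q \<subseteq> Q \<union> f ` Q"
  proof
    fix y assume "y \<in> orb f g Q"
    then obtain n q where q: "q \<in> Q" and "y = (f^^n) q \<or> y = (g^^n) q" unfolding orb_def by blast
    then have "y \<in> {q, f q}" using fn[of q n] gn[of q n] Q(2) by blast
    then show "y \<in> Q \<union> f ` Q" using q by blast
  qed
  then have fin: "finite (orb f g Q)" using Q(1) finite_subset by blast
  then have "closure (orb f g Q) = orb f g Q" by (simp add: finite_imp_closed closure_closed)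
  moreover have "infinite (A - orb f g Q)" using Diff_infinite_finite[OF fin inf] .
  then obtain x where "x \<in> A - orb f g Q" by (metis finite.emptyI ex_in_conv)
  ultimately show ?thesis by blast
qed

lemma sides:
  fixes f :: "real \<Rightarrow> real"
  assumes fA: "f ` A \<subseteq> A" and lo: "\<forall>y\<in>A. y < c \<longrightarrow> f y > c" and hi: "\<forall>y\<in>A. y > c \<longrightarrow> f y < c"
    and x: "x \<in> A"
  shows "(x < c \<longrightarrow> (even n \<longrightarrow> (f^^n) x < c) \<and> (odd n \<longrightarrow> (f^^n) x > c)) \<and>
         (x > c \<longrightarrow> (even n \<longrightarrow> (f^^n) x > c) \<and> (odd n \<longrightarrow> (f^^n) x < c))"
proof (induction n)
  case 0 show ?case by simp
next
  case (Suc n)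
  have "(f^^n) x \<in> A" using funpow_in[OF fA x] .
  then show ?case using Suc lo hi by auto
qed


theorem theorem2p4:
  fixes f :: "real \<Rightarrow> real"
  assumes "homeomorphic_map (top_of_set {0..1}) (top_of_set {0..1}) f"
  shows "height (cyclic_group {0..1} f) (top_of_set {0..1}) = \<infinity>"
proof -
  define A where "A = {0..1::real}"
  define g where "g = inv_into A f"
  have hom: "homeomorphic_map (top_of_set A) (top_of_set A) f" using assms by (simp add: A_def)
  have fAeq: "f ` A = A" using homeomorphic_imp_surjective_map[OF hom] by simp
  have inj: "inj_on f A" using homeomorphic_imp_injective_map[OF hom] by simp
  have cf: "continuous_on A f" using homeomorphic_imp_continuous_map[OF hom] by simp
  obtain k where hk: "homeomorphic_maps (top_of_set A) (top_of_set A) f k"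
    using hom homeomorphic_map_maps by blast
  have ck: "continuous_on A k" and kA: "k ` A \<subseteq> A" and fk: "\<forall>y\<in>A. f (k y) = y"
    using hk unfolding homeomorphic_maps_def by auto
  have gk: "g y = k y" if "y \<in> A" for y
  proof -
    have "g y = inv_into A f (f (k y))" using fk that g_def by simp
    also have "\<dots> = k y" using inv_into_f_f[OF inj] kA that by blast
    finally show ?thesis .
  qed
  have "continuous_on A g = continuous_on A k" by (rule continuous_on_cong) (auto simp: gk)
  then have cg: "continuous_on A g" using ck by simp
  have gA: "g ` A \<subseteq> A" using kA gk by auto
  have fg: "\<forall>x\<in>A. f (g x) = x" using fk gk by auto
  have gf: "\<forall>x\<in>A. g (f x) = x" using inv_into_f_f[OF inj] g_def by auto
  have fA: "f ` A \<subseteq> A" using fAeq by simp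
  have clA: "closed A" by (simp add: A_def)
  have infA: "infinite A" by (simp add: A_def)
  have J: "{min u v<..<max u v} \<subseteq> A" if "u \<in> A" "v \<in> A" for u v
    using that by (auto simp: A_def)
  have f01: "f 0 \<noteq> f 1" using inj by (auto simp: A_def dest: inj_onD)
  have cases: "(\<forall>x\<in>A. f (f x) = x) \<or>
     (\<exists>a b. a < b \<and> {a<..<b} \<subseteq> A \<and> (\<forall>n>0. \<forall>x\<in>{a<..<b}. (f^^n) x \<notin> {a<..<b}))"
  proof (cases "f 0 < f 1")
    case True
    have incr: "\<forall>x\<in>A. \<forall>y\<in>A. x < y \<longrightarrow> f x < f y"
      using inj_cont_mono[of f] cf inj True by (simp add: A_def)
    show ?thesis
    proof (cases "\<forall>x\<in>A. f x = x")
      case True then show ?thesis using fA by auto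
    next
      case False
      then obtain p where p: "p \<in> A" "f p \<noteq> p" by blast
      have fpA: "f p \<in> A" using fA p by blast
      have "min p (f p) < max p (f p)" using p by auto
      moreover have "\<forall>n>0. \<forall>x\<in>{min p (f p)<..<max p (f p)}. (f^^n) x \<notin> {min p (f p)<..<max p (f p)}"
      proof (intro allI impI ballI)
        fix n :: nat and x assume n: "n > 0" and x: "x \<in> {min p (f p)<..<max p (f p)}"
        have xA: "x \<in> A" using J[OF p(1) fpA] x by blast
        show "(f^^n) x \<notin> {min p (f p)<..<max p (f p)}"
          using incr_wander[OF fA incr p n xA] x by simp
      qed
      ultimately show ?thesis using J[OF p(1) fpA] by blast
    qed
  next
    case False
    then have lt: "- f 0 < - f 1" using f01 by simp
    have inj': "inj_on (\<lambda>x. - f x) {0..1}" using inj by (auto simp: A_def inj_on_def)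
    have cont': "continuous_on {0..1} (\<lambda>x. - f x)" using cf by (auto simp: A_def intro: continuous_intros)
    have decr: "\<forall>x\<in>A. \<forall>y\<in>A. x < y \<longrightarrow> f y < f x"
      using inj_cont_mono[of "\<lambda>x. - f x", OF cont' inj' lt] by (simp add: A_def)
    define h where "h x = f (f x)" for x
    have hA: "h ` A \<subseteq> A" using fA by (auto simp: h_def)
    have hincr: "\<forall>x\<in>A. \<forall>y\<in>A. x < y \<longrightarrow> h x < h y"
    proof (intro ballI impI)
      fix x y assume xy: "x \<in> A" "y \<in> A" "x < y"
      then have "f y < f x" using decr by blast
      moreover have "f x \<in> A" "f y \<in> A" using fA xy by auto
      ultimately show "h x < h y" using decr by (simp add: h_def)
    qed
    show ?thesis
    proof (cases "\<forall>x\<in>A. h x = x")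
      case True then show ?thesis by (simp add: h_def)
    next
      case False
      then obtain p where p: "p \<in> A" "h p \<noteq> p" by blast
      have hpA: "h p \<in> A" using hA p by blast
      have "\<exists>c. 0 \<le> c \<and> c \<le> 1 \<and> c - f c = 0"
      proof (rule IVT'[of "\<lambda>x. x - f x" 0 0 1])
        have "(0::real) \<in> A" "(1::real) \<in> A" by (simp_all add: A_def)
        then have "f 0 \<in> A" "f 1 \<in> A" using fA by blast+
        then show "0 - f 0 \<le> 0" "0 \<le> 1 - f 1" by (auto simp: A_def)
        show "(0::real) \<le> 1" by simp
        show "continuous_on {0..1} (\<lambda>x. x - f x)" using cf by (auto simp: A_def intro: continuous_intros)
      qed
      then obtain c where cA: "c \<in> A" and fc: "f c = c" by (auto simp: A_def)
      have lo: "\<forall>y\<in>A. y < c \<longrightarrow> f y > c" using decr cA fc by metis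
      have hi: "\<forall>y\<in>A. y > c \<longrightarrow> f y < c" using decr cA fc by metis
      have pc: "p \<noteq> c" using p fc by (auto simp: h_def)
      have side: "(\<forall>x\<in>{min p (h p)<..<max p (h p)}. x < c) \<or> (\<forall>x\<in>{min p (h p)<..<max p (h p)}. x > c)"
      proof (cases "p < c")
        case True
        then have "f p > c" using lo p by blast
        then have "h p < c" using hi fA p by (auto simp: h_def)
        then show ?thesis using True by auto
      next
        case False
        then have "p > c" using pc by simp
        then have "f p < c" using hi p by blast
        then have "h p > c" using lo fA p by (auto simp: h_def)
        then show ?thesis using \<open>p > c\<close> by auto
      qed
      have f2: "f^^2 = h" by (simp add: h_def fun_eq_iff numeral_2_eq_2)
      have "min p (h p) < max p (h p)" using p by auto
      moreover have "\<forall>n>0. \<forall>x\<in>{min p (h p)<..<max p (h p)}. (f^^n) x \<notin> {min p (h p)<..<max p (h p)}"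
      proof (intro allI impI ballI)
        fix n :: nat and x assume n: "n > 0" and x: "x \<in> {min p (h p)<..<max p (h p)}"
        have xA: "x \<in> A" using J[OF p(1) hpA] x by blast
        show "(f^^n) x \<notin> {min p (h p)<..<max p (h p)}"
        proof (cases "even n")
          case True
          then obtain m where m: "n = 2 * m" by blast
          then have m0: "m > 0" using n by simp
          have "(f^^n) = h^^m" using m f2 funpow_mult[where f=f and m=2 and n=m] by simp
          then show ?thesis using incr_wander[OF hA hincr p m0 xA] x by simp
        next
          case False
          have S: "(x < c \<longrightarrow> (even n \<longrightarrow> (f^^n) x < c) \<and> (odd n \<longrightarrow> (f^^n) x > c)) \<and>
                   (x > c \<longrightarrow> (even n \<longrightarrow> (f^^n) x > c) \<and> (odd n \<longrightarrow> (f^^n) x < c))"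
            using sides[OF fA lo hi xA] .
          show ?thesis
          proof
            assume inJ: "(f^^n) x \<in> {min p (h p)<..<max p (h p)}"
            from side show False
            proof
              assume L: "\<forall>x\<in>{min p (h p)<..<max p (h p)}. x < c"
              then have "x < c" "(f^^n) x < c" using x inJ by auto
              then show False using S False by auto
            next
              assume L: "\<forall>x\<in>{min p (h p)<..<max p (h p)}. x > c"
              then have "x > c" "(f^^n) x > c" using x inJ by auto
              then show False using S False by auto
            qed
          qed
        qed
      qed
      ultimately show ?thesis using J[OF p(1) hpA] by blast
    qed
  qed
  have key: "\<exists>D. D \<subseteq> A \<and> D \<noteq> {} \<and> (\<forall>Q. finite Q \<longrightarrow> Q \<subseteq> D \<longrightarrow> (\<exists>x\<in>D. x \<notin> closure (orb f g Q)))"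
    using cases
  proof
    assume inv: "\<forall>x\<in>A. f (f x) = x"
    have "A \<noteq> {}" using infA by auto
    moreover have "\<forall>Q. finite Q \<longrightarrow> Q \<subseteq> A \<longrightarrow> (\<exists>x\<in>A. x \<notin> closure (orb f g Q))"
      using invol_H[OF fA gf inv _ _ infA] by blast
    ultimately show ?thesis by blast
  next
    assume "\<exists>a b. a < b \<and> {a<..<b} \<subseteq> A \<and> (\<forall>n>0. \<forall>x\<in>{a<..<b}. (f^^n) x \<notin> {a<..<b})"
    then obtain a b where ab: "a < b" and sub: "{a<..<b} \<subseteq> A"
      and W: "\<forall>n>0. \<forall>x\<in>{a<..<b}. (f^^n) x \<notin> {a<..<b}" by blast
    have "{a<..<b} \<noteq> {}" using ab by simp
    moreover have "\<forall>Q. finite Q \<longrightarrow> Q \<subseteq> {a<..<b} \<longrightarrow> (\<exists>x\<in>{a<..<b}. x \<notin> closure (orb f g Q))"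
      using wander_H[OF gA fg sub ab W] by blast
    ultimately show ?thesis using sub by blast
  qed
  then obtain D where D: "D \<subseteq> A" "D \<noteq> {}"
    and H: "\<forall>Q. finite Q \<longrightarrow> Q \<subseteq> D \<longrightarrow> (\<exists>x\<in>D. x \<notin> closure (orb f g Q))" by blast
  have "height (cyclic_group A f) (top_of_set A) = \<infinity>"
    by (rule height_infinite[OF clA g_def fA gA cf cg fg gf D]) (use H in blast)
  then show ?thesis by (simp add: A_def)
qed

end
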